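(* Let $w_0,w_1,p,q$ be integers with $p\equiv 2\pmod 4$, $q\equiv 3\pmod 4$ and $w_0+w_1$ odd, and let $(w_n)_{n\ge0}$ be defined by $w_{n+2}=pw_{n+1}+qw_n$ for all $n\ge0$. Then for all integers $n\ge0$ and $k\ge1$, $$w_{n+2^k}\equiv w_n+2^k\pmod{2^{k+1}}.$$ *)

theory Defs
  imports Main "HOL-Number_Theory.Cong"
begin

end

theory Submission
  imports Defs
begin

lemma stepL:
  fixes s :: "nat \<Rightarrow> int" and p q b c :: int
  assumes pb: "p = 2 + 4*b" and qc: "q = 3 + 4*c"
    and rec: "\<And>n. s (n + 2) = p * s (n + 1) + q * s n"
    and hs: "\<And>n. \<exists>a. s n = 2^k*(1+2*a)"
  shows "(2::int)^(k+2) dvd (s (n+2) - s n)"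
proof -
  obtain a1 where a1: "s (n+1) = 2^k*(1+2*a1)" using hs by blast
  obtain a0 where a0: "s n = 2^k*(1+2*a0)" using hs by blast
  have "s (n+2) - s n = 2^(k+2) * (1+a1+b+2*b*a1+a0+c+2*c*a0)"
    unfolding rec a1 a0 pb qc by (simp add: algebra_simps power_add)
  then show ?thesis by simp
qed

lemma iterL:
  fixes s :: "nat \<Rightarrow> int"
  assumes "\<And>n. (m::int) dvd (s (n+2) - s n)"
  shows "m dvd (s (n + 2*j) - s n)"
proof (induction j)
  case 0 then show ?case by simp
next
  case (Suc j)
  have "s (n + 2*Suc j) - s n = (s ((n+2*j)+2) - s (n+2*j)) + (s (n+2*j) - s n)"
    by (simp add: add.assoc)
  then show ?case using assms[of "n+2*j"] Suc by (metis dvd_add)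
qed

lemma paritw:
  fixes w :: "nat \<Rightarrow> int" and p q :: int
  assumes "even p" "odd q" "odd (w 0 + w 1)"
    and hrec: "\<And>n. w (n + 2) = p * w (n + 1) + q * w n"
  shows "odd (w n + w (n+1))"
proof (induction n)
  case 0 then show ?case using assms by simp
next
  case (Suc n)
  have "w (Suc n) + w (Suc n + 1) = w (n+1) + p * w (n+1) + q * w n"
    using hrec[of n] by (simp add: add.commute)
  then show ?case using Suc assms by auto
qed

theorem mainTheorem9:
  fixes w :: "nat \<Rightarrow> int" and p q :: int
  assumes hp: "[p = 2] (mod 4)"
    and hq: "[q = 3] (mod 4)"
    and hodd: "odd (w 0 + w 1)"
    and hrec: "\<And>n. w (n + 2) = p * w (n + 1) + q * w n"
  shows "\<forall>n k. k \<ge> 1 \<longrightarrow> [w (n + 2 ^ k) = w n + 2 ^ k] (mod 2 ^ (k + 1))"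
proof -
  obtain b where pb: "p = 2 + 4*b"
    using hp unfolding cong_iff_dvd_diff by (metis dvd_def diff_eq_eq add.commute)
  obtain c where qc: "q = 3 + 4*c"
    using hq unfolding cong_iff_dvd_diff by (metis dvd_def diff_eq_eq add.commute)
  have par: "odd (w n + w (n+1))" for n
    using paritw[of p q w n] pb qc hodd hrec by auto
  have Q: "\<forall>n. \<exists>a. w (n + 2^k) - w n = 2^k*(1+2*a)" if "k \<ge> 1" for k
    using that
  proof (induction k rule: dec_induct)
    case base
    show ?case
    proof
      fix n
      obtain t where t: "w n + w (n+1) = 1 + 2*t" using par[of n] by (metis oddE add.commute)
      have "w (n + 2^1) - w n = p * w (n+1) + (q - 1) * w n"
        using hrec[of n] by (simp add: algebra_simps)
      also have "\<dots> = 2*(w n + w (n+1)) + 4*(b * w (n+1) + c * w n)"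
        unfolding pb qc by (simp add: algebra_simps)
      also have "\<dots> = 2^1*(1+2*(t + b * w (n+1) + c * w n))"
        unfolding t by (simp add: algebra_simps)
      finally show "\<exists>a. w (n + 2^1) - w n = 2^1*(1+2*a)" by blast
    qed
  next
    case (step k)
    define s where "s n = w (n + 2^k) - w n" for n
    have srec: "s (n + 2) = p * s (n + 1) + q * s n" for n
      unfolding s_def using hrec[of n] hrec[of "n + 2^k"]
      by (simp add: algebra_simps)
    have hs: "\<exists>a. s n = 2^k*(1+2*a)" for n using step(3) s_def by simp
    have d2: "(2::int)^(k+2) dvd (s (n+2) - s n)" for n
      using stepL[OF pb qc srec hs] .
    have kk: "2 * 2^(k-1) = (2::nat)^k" using step(1)
      by (metis One_nat_def Suc_pred' less_eq_Suc_le power_Suc)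
    show ?case
    proof
      fix n
      have "(2::int)^(k+2) dvd (s (n + 2*2^(k-1)) - s n)"
        using iterL[of "2^(k+2)" s, OF d2] by blast
      then obtain d where d: "s (n + 2^k) - s n = 2^(k+2) * d"
        using kk by (auto simp: dvd_def)
      obtain a where a: "s n = 2^k*(1+2*a)" using hs by blast
      have "w (n + 2^Suc k) - w n = s (n + 2^k) + s n"
        unfolding s_def by (simp add: add.assoc mult_2)
      also have "\<dots> = (s (n + 2^k) - s n) + 2 * s n" by simp
      also have "\<dots> = 2^Suc k * (1 + 2*(a + d))"
        using d a by (simp add: algebra_simps)
      finally show "\<exists>a. w (n + 2^Suc k) - w n = 2^Suc k*(1+2*a)" by blast
    qed
  qed
  show ?thesis
  proof (intro allI impI)
    fix n k :: nat assume "k \<ge> 1"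
    then obtain a where a: "w (n + 2^k) - w n = 2^k*(1+2*a)" using Q by blast
    have "w (n + 2^k) - (w n + 2^k) = 2^(k+1) * a" using a by (simp add: algebra_simps)
    then show "[w (n + 2 ^ k) = w n + 2 ^ k] (mod 2 ^ (k + 1))"
      unfolding cong_iff_dvd_diff by simp
  qed
qed

end
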